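(* Let $X$ be a closed subset of $\mathbb{R}^d$, let $(K_l)_{l\in\mathbb{N}}$ be a fundamental sequence of compact sets covering $\mathbb{R}^d$, let $t\in\mathscr{D}(\mathbb{R}^d\setminus X)'$ be compactly supported and let $f\in\mathscr{E}(\mathbb{R}^d\setminus X)$. Suppose: (1) there exist $C_1,s_1>0$ and integers $k,l$ such that $|\langle t,\varphi\rangle|\le C_1[1+d(\operatorname{Supp}\varphi,X)^{-s_1}]\|\varphi\|_k^l$ for every $\varphi\in\mathcal{I}(X,\mathbb{R}^d)$; (2) for every $k'\in\mathbb{N}$ and every compact $K\subseteq\mathbb{R}^d$ there exist $C_2,s_2>0$ with $\sup_{|\nu|\le k'}|\partial^\nu f(x)|\le C_2[1+d(x,X)^{-s_2}]$ for all $x\in K\setminus X$. Let $s_2$ be the constant given by (2) for $k'=k$ and $K=K_l$. Then there exists $C>0$ such that $|\langle ft,\varphi\rangle|\le C[1+d(\operatorname{Supp}\varphi,X)^{-(s_1+s_2)}]\|\varphi\|_k^l$ for every $\varphi\in\mathcal{I}(X,\mathbb{R}^d)$.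
   Context: A fundamental sequence: compacts $K_l$ with $K_1\ne\emptyset$, $K_l\subseteq$ interior of $K_{l+1}$, union $\mathbb{R}^d$. $\|\varphi\|_k^l=\sup_{x\in K_l,|\nu|\le k}|\partial^\nu\varphi(x)|$. $\mathcal{I}(X,\mathbb{R}^d)=\{\varphi\in\mathscr{E}(\mathbb{R}^d):\operatorname{Supp}\varphi\cap X=\emptyset\}$; pairings with $\varphi\in\mathcal{I}(X,\mathbb{R}^d)$ are understood via restriction to $\mathbb{R}^d\setminus X$ and the canonical extension of compactly supported distributions to smooth functions. $ft$ is the distribution $\psi\mapsto\langle t,f\psi\rangle$. $d$ is the Euclidean distance, with the convention $0^{-s}=+\infty$. *)

theory Defs
  imports "HOL-Analysis.Analysis"
begin

text \<open>For lists of basis vectors these are exactly the partial derivatives of the paper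
  (for smooth functions the order of differentiation is irrelevant).\<close>
fun dderiv :: "'a::euclidean_space list \<Rightarrow> ('a \<Rightarrow> 'b::real_normed_vector) \<Rightarrow> 'a \<Rightarrow> 'b" where
  "dderiv [] g = g"
| "dderiv (v # vs) g = (\<lambda>x. frechet_derivative (dderiv vs g) (at x) v)"

definition smooth_on :: "'a::euclidean_space set \<Rightarrow> ('a \<Rightarrow> 'b::real_normed_vector) \<Rightarrow> bool" where
  "smooth_on U g \<longleftrightarrow>
     (\<forall>vs. set vs \<subseteq> Basis \<longrightarrow> (\<forall>x\<in>U. dderiv vs g differentiable (at x)))"

definition seminorm_on :: "'a::euclidean_space set \<Rightarrow> nat \<Rightarrow> ('a \<Rightarrow> 'b::real_normed_vector) \<Rightarrow> real" where
  "seminorm_on K k g =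
     Sup (insert 0 {norm (dderiv vs g x) | x vs. x \<in> K \<and> set vs \<subseteq> Basis \<and> length vs \<le> k})"

definition Supp :: "('a::euclidean_space \<Rightarrow> 'b::zero) \<Rightarrow> 'a set" where
  "Supp g = closure {x. g x \<noteq> 0}"

definition Ispace :: "'a::euclidean_space set \<Rightarrow> ('a \<Rightarrow> complex) set" where
  "Ispace X = {\<phi>. smooth_on UNIV \<phi> \<and> Supp \<phi> \<inter> X = {}}"

definition fundamental_seq :: "(nat \<Rightarrow> 'a::euclidean_space set) \<Rightarrow> bool" where
  "fundamental_seq K \<longleftrightarrow>
     (\<forall>l\<ge>1. compact (K l)) \<and> K 1 \<noteq> {} \<and>
     (\<forall>l\<ge>1. K l \<subseteq> interior (K (Suc l))) \<and> (\<Union>l\<in>{1..}. K l) = UNIV"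

text \<open>Distance d(A,X) between sets with the conventions: inf over the empty set is
  +infinity (so d = +infinity if A or X is empty).  dist_pos A X says d(A,X) > 0;
  when d(A,X) = 0 the factor d^(-s) is +infinity and the bound is vacuous.
  weight s A X = 1 + d(A,X)^(-s), valid when dist_pos A X holds.\<close>
definition dist_pos :: "'a::metric_space set \<Rightarrow> 'a set \<Rightarrow> bool" where
  "dist_pos A X \<longleftrightarrow> A = {} \<or> X = {} \<or> setdist A X > 0"

definition weight :: "real \<Rightarrow> 'a::metric_space set \<Rightarrow> 'a set \<Rightarrow> real" where
  "weight s A X = (if A = {} \<or> X = {} then 1 else 1 + setdist A X powr (-s))"

text \<open>Compactly supported distributions on the open set U, identified (canonical extension)
  with continuous linear functionals on E(U) = smooth functions on U; the functional only
  depends on the restriction of its argument to U.\<close>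
definition compact_distribution :: "'a::euclidean_space set \<Rightarrow> (('a \<Rightarrow> complex) \<Rightarrow> complex) \<Rightarrow> bool" where
  "compact_distribution U t \<longleftrightarrow>
     (\<forall>\<phi> \<psi>. smooth_on U \<phi> \<longrightarrow> smooth_on U \<psi> \<longrightarrow> t (\<lambda>x. \<phi> x + \<psi> x) = t \<phi> + t \<psi>) \<and>
     (\<forall>c \<phi>. smooth_on U \<phi> \<longrightarrow> t (\<lambda>x. c * \<phi> x) = c * t \<phi>) \<and>
     (\<forall>\<phi> \<psi>. (\<forall>x\<in>U. \<phi> x = \<psi> x) \<longrightarrow> t \<phi> = t \<psi>) \<and>
     (\<exists>K k C. compact K \<and> K \<subseteq> U \<and>
        (\<forall>\<phi>. smooth_on U \<phi> \<longrightarrow> norm (t \<phi>) \<le> C * seminorm_on K k \<phi>))"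

end

theory Submission
  imports Defs
begin

lemma frechet_local:
  assumes "open U" "x \<in> U" "\<And>y. y \<in> U \<Longrightarrow> g1 y = g2 y"
  shows "frechet_derivative g1 (at x) = frechet_derivative g2 (at x)"
proof -
  have "(g1 has_derivative D) (at x) \<longleftrightarrow> (g2 has_derivative D) (at x)" for D
    using has_derivative_transform_within_open[OF _ assms(1,2), of g1 D UNIV g2]
          has_derivative_transform_within_open[OF _ assms(1,2), of g2 D UNIV g1] assms(3)
    by auto
  then show ?thesis unfolding frechet_derivative_def by simp
qed

lemma dderiv_local:
  assumes "open U" "\<And>y. y \<in> U \<Longrightarrow> g1 y = g2 y"
  shows "x \<in> U \<Longrightarrow> dderiv vs g1 x = dderiv vs g2 x"
proof (induction vs arbitrary: x)
  case Nil then show ?case using assms by simp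
next
  case (Cons v vs)
  have "frechet_derivative (dderiv vs g1) (at x) = frechet_derivative (dderiv vs g2) (at x)"
    by (rule frechet_local[OF assms(1) Cons.prems]) (rule Cons.IH)
  then show ?case by simp
qed

lemma dderiv_zero: "dderiv vs (\<lambda>x. 0) = (\<lambda>x. 0)"
  by (induction vs) auto

fun PP :: "'a list \<Rightarrow> ('a list \<times> 'a list) list" where
  "PP [] = [([],[])]"
| "PP (v#vs) = map (\<lambda>(a,b). (v#a,b)) (PP vs) @ map (\<lambda>(a,b). (a, v#b)) (PP vs)"

lemma PP_length: "length (PP vs) = 2 ^ length vs"
  by (induction vs) auto

lemma PP_set: "p \<in> set (PP vs) \<Longrightarrow> set (fst p) \<subseteq> set vs \<and> set (snd p) \<subseteq> set vs
   \<and> length (fst p) \<le> length vs \<and> length (snd p) \<le> length vs"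
  by (induction vs arbitrary: p) fastforce+

lemma has_derivative_sum_list:
  assumes "\<And>p. p \<in> set L \<Longrightarrow> (F p has_derivative F' p) (at x)"
  shows "((\<lambda>y. \<Sum>p\<leftarrow>L. F p y) has_derivative (\<lambda>k. \<Sum>p\<leftarrow>L. F' p k)) (at x)"
  using assms
proof (induction L)
  case Nil then show ?case by (simp add: has_derivative_const)
next
  case (Cons a L)
  then show ?case by (simp add: has_derivative_add)
qed

lemma leibniz:
  fixes f g :: "'a::euclidean_space \<Rightarrow> complex"
  assumes U: "open U"
    and sf: "\<And>vs x. set vs \<subseteq> Basis \<Longrightarrow> x \<in> U \<Longrightarrow> dderiv vs f differentiable (at x)"
    and sg: "\<And>vs x. set vs \<subseteq> Basis \<Longrightarrow> x \<in> U \<Longrightarrow> dderiv vs g differentiable (at x)"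
  shows "set vs \<subseteq> Basis \<Longrightarrow> x \<in> U \<Longrightarrow>
     dderiv vs (\<lambda>y. f y * g y) x = (\<Sum>(a,b)\<leftarrow>PP vs. dderiv a f x * dderiv b g x)"
proof (induction vs arbitrary: x)
  case Nil then show ?case by simp
next
  case (Cons v vs)
  define h where "h = (\<lambda>y. \<Sum>(a,b)\<leftarrow>PP vs. dderiv a f y * dderiv b g y)"
  have eq: "frechet_derivative (dderiv vs (\<lambda>y. f y * g y)) (at x) = frechet_derivative h (at x)"
    by (rule frechet_local[OF U Cons.prems(2)]) (use Cons in \<open>auto simp: h_def\<close>)
  have hd: "(h has_derivative (\<lambda>k. \<Sum>(a,b)\<leftarrow>PP vs. dderiv a f x * frechet_derivative (dderiv b g) (at x) k
        + frechet_derivative (dderiv a f) (at x) k * dderiv b g x)) (at x)"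
    unfolding h_def split_def
  proof (rule has_derivative_sum_list)
    fix p assume p: "p \<in> set (PP vs)"
    then have "set (fst p) \<subseteq> Basis" "set (snd p) \<subseteq> Basis" using PP_set[OF p] Cons.prems by auto
    then have "(dderiv (fst p) f has_derivative frechet_derivative (dderiv (fst p) f) (at x)) (at x)"
      "(dderiv (snd p) g has_derivative frechet_derivative (dderiv (snd p) g) (at x)) (at x)"
      using sf sg Cons.prems(2) frechet_derivative_works by blast+
    then show "((\<lambda>y. dderiv (fst p) f y * dderiv (snd p) g y) has_derivative
      (\<lambda>k. dderiv (fst p) f x * frechet_derivative (dderiv (snd p) g) (at x) k +
           frechet_derivative (dderiv (fst p) f) (at x) k * dderiv (snd p) g x)) (at x)"
      by (rule has_derivative_mult)
  qed
  have "dderiv (v#vs) (\<lambda>y. f y * g y) x = frechet_derivative h (at x) v" using eq by simp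
  also have "\<dots> = (\<Sum>(a,b)\<leftarrow>PP vs. dderiv a f x * dderiv (v#b) g x + dderiv (v#a) f x * dderiv b g x)"
    by (simp flip: frechet_derivative_at[OF hd] add: split_def)
  also have "\<dots> = (\<Sum>(a,b)\<leftarrow>PP (v#vs). dderiv a f x * dderiv b g x)"
    by (simp add: sum_list_addf comp_def split_def add.commute)
  finally show ?case .
qed


lemma semi_bdd:
  assumes "compact K" "\<And>vs x. set vs \<subseteq> Basis \<Longrightarrow> x \<in> K \<Longrightarrow> dderiv vs g differentiable (at x)"
  shows "bdd_above (insert 0 {norm (dderiv vs g x) | x vs. x \<in> K \<and> set vs \<subseteq> Basis \<and> length vs \<le> k})"
proof -
  let ?L = "{vs. set vs \<subseteq> (Basis::'a set) \<and> length vs \<le> k}"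
  have fin: "finite ?L" by (rule finite_lists_length_le) simp
  have eq: "{norm (dderiv vs g x) | x vs. x \<in> K \<and> set vs \<subseteq> Basis \<and> length vs \<le> k}
      = (\<Union>vs\<in>?L. (\<lambda>x. norm (dderiv vs g x)) ` K)" by auto
  have "bounded ((\<lambda>x. norm (dderiv vs g x)) ` K)" if "vs \<in> ?L" for vs
  proof -
    have "continuous_on K (\<lambda>x. norm (dderiv vs g x))"
      apply (intro continuous_on_norm continuous_at_imp_continuous_on ballI)
      using assms(2) that differentiable_imp_continuous_within by blast
    then show ?thesis using compact_continuous_image[OF _ assms(1)] compact_imp_bounded by blast
  qed
  then have "bounded (\<Union>vs\<in>?L. (\<lambda>x. norm (dderiv vs g x)) ` K)"
    using fin by auto
  then show ?thesis unfolding eq by (auto intro: bounded_imp_bdd_above)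
qed

lemma semi_ge:
  assumes "bdd_above (insert 0 {norm (dderiv vs g x) | x vs. x \<in> K \<and> set vs \<subseteq> Basis \<and> length vs \<le> k})"
  shows "x \<in> K \<Longrightarrow> set vs \<subseteq> Basis \<Longrightarrow> length vs \<le> k \<Longrightarrow> norm (dderiv vs g x) \<le> seminorm_on K k g"
    and "0 \<le> seminorm_on K k g"
  unfolding seminorm_on_def by (rule cSup_upper[OF _ assms], blast)+

lemma semi_le:
  assumes "0 \<le> B" "\<And>x vs. x \<in> K \<Longrightarrow> set vs \<subseteq> Basis \<Longrightarrow> length vs \<le> k \<Longrightarrow> norm (dderiv vs g x) \<le> B"
  shows "seminorm_on K k g \<le> B"
  unfolding seminorm_on_def using assms by (intro cSup_least) auto

lemma semi_point_bdd:
  "bdd_above (insert 0 {norm (dderiv vs g x) | x vs. x \<in> {y} \<and> set vs \<subseteq> (Basis::'a::euclidean_space set) \<and> length vs \<le> k})"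
proof -
  let ?L = "{vs. set vs \<subseteq> (Basis::'a set) \<and> length vs \<le> k}"
  have fin: "finite ?L" by (rule finite_lists_length_le) simp
  have "{norm (dderiv vs g x) | x vs. x \<in> {y} \<and> set vs \<subseteq> Basis \<and> length vs \<le> k}
      = (\<lambda>vs. norm (dderiv vs g y)) ` ?L" by auto
  then show ?thesis using fin by (simp add: bdd_above_insert)
qed

lemma pw1: "(d::real) > 0 \<Longrightarrow> d \<le> 1 \<Longrightarrow> s > 0 \<Longrightarrow> d powr (-s) \<ge> 1"
  by (smt (verit, ccfv_SIG) powr_less_mono2_neg powr_one_eq_one)
lemma pw2: "(d::real) > 0 \<Longrightarrow> \<not> d \<le> 1 \<Longrightarrow> s > 0 \<Longrightarrow> d powr (-s) \<le> 1"
  by (meson linorder_not_le neg_less_0_iff_less order.strict_iff_order powr_less_one)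

lemma weight_ineq:
  fixes d s1 s2 :: real
  assumes "d > 0" "s1 > 0" "s2 > 0"
  shows "(1 + d powr (-s1)) * (1 + d powr (-s2)) \<le> 4 * (1 + d powr (-(s1+s2)))"
proof -
  define a where "a = d powr (-s1)"
  define b where "b = d powr (-s2)"
  have ab: "d powr (-(s1+s2)) = a * b" unfolding a_def b_def by (simp add: powr_add[symmetric])
  have "(a - 1) * (b - 1) \<ge> 0"
  proof (cases "d \<le> 1")
    case True
    then have "a \<ge> 1" "b \<ge> 1" unfolding a_def b_def using assms pw1 by auto
    then show ?thesis by simp
  next
    case False
    then have "a \<le> 1" "b \<le> 1" unfolding a_def b_def using assms pw2 by auto
    then show ?thesis by (simp add: mult_nonpos_nonpos)
  qed
  moreover have "a \<ge> 0" "b \<ge> 0" unfolding a_def b_def by auto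
  ultimately show ?thesis unfolding ab a_def[symmetric] b_def[symmetric] by (simp add: algebra_simps)
qed


lemma norm_sum_list_le:
  fixes F :: "'b \<Rightarrow> 'c::real_normed_vector"
  assumes "\<And>p. p \<in> set L \<Longrightarrow> norm (F p) \<le> B"
  shows "norm (\<Sum>p\<leftarrow>L. F p) \<le> real (length L) * B"
  using assms
proof (induction L)
  case Nil then show ?case by simp
next
  case (Cons a L)
  have "norm (\<Sum>p\<leftarrow>a#L. F p) \<le> norm (F a) + norm (\<Sum>p\<leftarrow>L. F p)"
    by (simp add: norm_triangle_ineq)
  also have "\<dots> \<le> B + real (length L) * B" using Cons by (intro add_mono) auto
  finally show ?case by (simp add: algebra_simps)
qed

lemma leibniz_diff:
  fixes f g :: "'a::euclidean_space \<Rightarrow> complex"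
  assumes U: "open U"
    and sf: "\<And>vs x. set vs \<subseteq> Basis \<Longrightarrow> x \<in> U \<Longrightarrow> dderiv vs f differentiable (at x)"
    and sg: "\<And>vs x. set vs \<subseteq> Basis \<Longrightarrow> x \<in> U \<Longrightarrow> dderiv vs g differentiable (at x)"
    and vs: "set vs \<subseteq> Basis" and x: "x \<in> U"
  shows "dderiv vs (\<lambda>y. f y * g y) differentiable (at x)"
proof -
  define h where "h = (\<lambda>y. \<Sum>(a,b)\<leftarrow>PP vs. dderiv a f y * dderiv b g y)"
  have hd: "(h has_derivative (\<lambda>k. \<Sum>(a,b)\<leftarrow>PP vs. dderiv a f x * frechet_derivative (dderiv b g) (at x) k
        + frechet_derivative (dderiv a f) (at x) k * dderiv b g x)) (at x)"
    unfolding h_def split_def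
  proof (rule has_derivative_sum_list)
    fix p assume p: "p \<in> set (PP vs)"
    then have "set (fst p) \<subseteq> Basis" "set (snd p) \<subseteq> Basis" using PP_set[OF p] vs by auto
    then have "(dderiv (fst p) f has_derivative frechet_derivative (dderiv (fst p) f) (at x)) (at x)"
      "(dderiv (snd p) g has_derivative frechet_derivative (dderiv (snd p) g) (at x)) (at x)"
      using sf sg x frechet_derivative_works by blast+
    then show "((\<lambda>y. dderiv (fst p) f y * dderiv (snd p) g y) has_derivative
      (\<lambda>k. dderiv (fst p) f x * frechet_derivative (dderiv (snd p) g) (at x) k +
           frechet_derivative (dderiv (fst p) f) (at x) k * dderiv (snd p) g x)) (at x)"
      by (rule has_derivative_mult)
  qed
  have "(dderiv vs (\<lambda>y. f y * g y) has_derivative (\<lambda>k. \<Sum>(a,b)\<leftarrow>PP vs. dderiv a f x * frechet_derivative (dderiv b g) (at x) k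
        + frechet_derivative (dderiv a f) (at x) k * dderiv b g x)) (at x)"
    by (rule has_derivative_transform_within_open[OF hd U x])
       (use leibniz[OF U sf sg vs] in \<open>auto simp: h_def\<close>)
  then show ?thesis unfolding differentiable_def by blast
qed

theorem proposition6p3:
  fixes X :: "'a::euclidean_space set"
    and K :: "nat \<Rightarrow> 'a set"
    and t :: "('a \<Rightarrow> complex) \<Rightarrow> complex"
    and f :: "'a \<Rightarrow> complex"
    and C1 s1 C2 s2 :: real and k l :: nat
  assumes "closed X"
    and "fundamental_seq K"
    and "compact_distribution (- X) t"
    and "smooth_on (- X) f"
    and "C1 > 0" and "s1 > 0" and "l \<ge> 1"
    and hyp1: "\<forall>\<phi>\<in>Ispace X. dist_pos (Supp \<phi>) X \<longrightarrow>
                 norm (t \<phi>) \<le> C1 * weight s1 (Supp \<phi>) X * seminorm_on (K l) k \<phi>"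
    and hyp2: "\<forall>k'::nat. \<forall>K'. compact K' \<longrightarrow> (\<exists>C2' s2'. C2' > 0 \<and> s2' > 0 \<and>
                 (\<forall>x\<in>K' - X. seminorm_on {x} k' f \<le> C2' * weight s2' {x} X))"
    and "C2 > 0" and "s2 > 0"
    and hyp2kl: "\<forall>x\<in>K l - X. seminorm_on {x} k f \<le> C2 * weight s2 {x} X"
  shows "\<exists>C>0. \<forall>\<phi>\<in>Ispace X. dist_pos (Supp \<phi>) X \<longrightarrow>
           norm (t (\<lambda>x. f x * \<phi> x)) \<le> C * weight (s1 + s2) (Supp \<phi>) X * seminorm_on (K l) k \<phi>"
proof (intro exI[of _ "4 * 2^k * C1 * C2"] conjI ballI impI)
  show "0 < 4 * 2 ^ k * C1 * C2" using assms by simp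
  fix \<phi> assume phi: "\<phi> \<in> Ispace X" and dp: "dist_pos (Supp \<phi>) X"
  have sphi: "\<And>vs x. set vs \<subseteq> Basis \<Longrightarrow> dderiv vs \<phi> differentiable (at x)"
    and disj: "Supp \<phi> \<inter> X = {}" using phi unfolding Ispace_def smooth_on_def by auto
  have sf: "\<And>vs x. set vs \<subseteq> Basis \<Longrightarrow> x \<in> -X \<Longrightarrow> dderiv vs f differentiable (at x)"
    using assms(4) unfolding smooth_on_def by auto
  define g where "g = (\<lambda>x. f x * \<phi> x)"
  have U1: "open (-X)" using assms(1) by auto
  have U2: "open (- Supp \<phi>)" unfolding Supp_def by auto
  have phi0: "\<phi> x = 0" if "x \<in> - Supp \<phi>" for x
  proof -
    have "x \<notin> {x. \<phi> x \<noteq> 0}" using that closure_subset[of "{x. \<phi> x \<noteq> 0}"]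
      unfolding Supp_def by blast
    then show ?thesis by simp
  qed
  have g0: "dderiv vs g x = 0" if "x \<in> - Supp \<phi>" for vs x
  proof -
    have "dderiv vs g x = dderiv vs (\<lambda>x. 0) x"
      by (rule dderiv_local[OF U2 _ that]) (simp add: g_def phi0)
    then show ?thesis by (simp add: dderiv_zero)
  qed
  have lg: "dderiv vs g x = (\<Sum>(a,b)\<leftarrow>PP vs. dderiv a f x * dderiv b \<phi> x)"
    if "set vs \<subseteq> Basis" "x \<in> -X" for vs x
    unfolding g_def by (rule leibniz[OF U1 sf sphi that])
  have smooth_g: "smooth_on UNIV g"
    unfolding smooth_on_def
  proof (intro allI impI ballI)
    fix vs :: "'a list" and x :: 'a
    assume vs: "set vs \<subseteq> Basis" and "x \<in> UNIV"
    show "dderiv vs g differentiable (at x)"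
    proof (cases "x \<in> X")
      case False
      then show ?thesis unfolding g_def by (intro leibniz_diff[OF U1 sf sphi vs]) auto
    next
      case True
      then have xU2: "x \<in> - Supp \<phi>" using disj by auto
      have "((\<lambda>y. 0::complex) has_derivative (\<lambda>h. 0)) (at x)" by (rule has_derivative_const)
      then have "(dderiv vs g has_derivative (\<lambda>h. 0)) (at x)"
        by (rule has_derivative_transform_within_open[OF _ U2 xU2]) (simp add: g0)
      then show ?thesis unfolding differentiable_def by blast
    qed
  qed
  have supp_sub: "Supp g \<subseteq> Supp \<phi>" unfolding Supp_def g_def by (intro closure_mono) auto
  have gI: "g \<in> Ispace X" unfolding Ispace_def using smooth_g supp_sub disj by auto
  have W1ge: "weight s1 (Supp \<phi>) X \<ge> 1" unfolding weight_def by auto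
  have W1g: "weight s1 (Supp g) X \<ge> 1" unfolding weight_def by auto
  have W2ge: "weight s2 (Supp \<phi>) X \<ge> 1" unfolding weight_def by auto
  have dpg: "dist_pos (Supp g) X \<and> weight s1 (Supp g) X \<le> weight s1 (Supp \<phi>) X"
  proof (cases "Supp g = {} \<or> X = {}")
    case True
    then show ?thesis using W1ge unfolding dist_pos_def by (auto simp: weight_def)
  next
    case False
    then have ne: "Supp \<phi> \<noteq> {}" "Supp g \<noteq> {}" "X \<noteq> {}" using supp_sub by auto
    have pos: "setdist (Supp \<phi>) X > 0" using dp ne unfolding dist_pos_def by auto
    have le: "setdist (Supp \<phi>) X \<le> setdist (Supp g) X" by (rule setdist_subset_left[OF ne(2) supp_sub])
    have "setdist (Supp g) X powr (-s1) \<le> setdist (Supp \<phi>) X powr (-s1)"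
      by (rule powr_mono2'[OF _ pos le]) (use assms in auto)
    then show ?thesis using ne pos le unfolding dist_pos_def weight_def by auto
  qed
  have cK: "compact (K l)" using assms(2,7) unfolding fundamental_seq_def by auto
  have bphi: "bdd_above (insert 0 {norm (dderiv vs \<phi> x) | x vs. x \<in> K l \<and> set vs \<subseteq> Basis \<and> length vs \<le> k})"
    by (rule semi_bdd[OF cK]) (use sphi in auto)
  define M where "M = seminorm_on (K l) k \<phi>"
  have M0: "M \<ge> 0" unfolding M_def by (rule semi_ge(2)[OF bphi])
  define W2 where "W2 = weight s2 (Supp \<phi>) X"
  have wx: "weight s2 {x} X \<le> W2" if "x \<in> Supp \<phi>" for x
  proof (cases "X = {}")
    case True then show ?thesis unfolding W2_def weight_def by auto
  next
    case False
    then have ne: "Supp \<phi> \<noteq> {}" using that by auto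
    have pos: "setdist (Supp \<phi>) X > 0" using dp ne False unfolding dist_pos_def by auto
    have le: "setdist (Supp \<phi>) X \<le> setdist {x} X" by (rule setdist_subset_left) (use that in auto)
    have "setdist {x} X powr (-s2) \<le> setdist (Supp \<phi>) X powr (-s2)"
      by (rule powr_mono2'[OF _ pos le]) (use assms in auto)
    then show ?thesis using ne False unfolding W2_def weight_def by auto
  qed
  have semg: "seminorm_on (K l) k g \<le> 2^k * (C2 * W2 * M)"
  proof (rule semi_le)
    show "0 \<le> 2^k * (C2 * W2 * M)" using M0 W2ge assms unfolding W2_def by auto
    fix x and vs :: "'a list" assume x: "x \<in> K l" and vs: "set vs \<subseteq> Basis" and len: "length vs \<le> k"
    show "norm (dderiv vs g x) \<le> 2^k * (C2 * W2 * M)"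
    proof (cases "x \<in> Supp \<phi>")
      case False
      then show ?thesis using g0[of x vs] M0 W2ge assms unfolding W2_def by auto
    next
      case True
      then have xX: "x \<in> -X" using disj by auto
      have "norm (dderiv vs g x) \<le> real (length (PP vs)) * (C2 * W2 * M)"
        unfolding lg[OF vs xX] split_def
      proof (rule norm_sum_list_le)
        fix p assume p: "p \<in> set (PP vs)"
        note pp = PP_set[OF p]
        have "norm (dderiv (fst p) f x) \<le> seminorm_on {x} k f"
          by (rule semi_ge(1)[OF semi_point_bdd]) (use pp vs len in auto)
        also have "\<dots> \<le> C2 * weight s2 {x} X" using hyp2kl x xX by auto
        also have "\<dots> \<le> C2 * W2" using wx[OF True] assms by auto
        finally have n1: "norm (dderiv (fst p) f x) \<le> C2 * W2" .
        have n2: "norm (dderiv (snd p) \<phi> x) \<le> M"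
          unfolding M_def by (rule semi_ge(1)[OF bphi x]) (use pp vs len in auto)
        show "norm (dderiv (fst p) f x * dderiv (snd p) \<phi> x) \<le> C2 * W2 * M"
          unfolding norm_mult by (rule mult_mono[OF n1 n2]) (use M0 assms W2ge in \<open>auto simp: W2_def\<close>)
      qed
      also have "\<dots> \<le> 2^k * (C2 * W2 * M)"
        unfolding PP_length
        by (rule mult_right_mono) (use M0 W2ge assms len in \<open>auto simp: W2_def\<close>)
      finally show ?thesis .
    qed
  qed
  define W1 where "W1 = weight s1 (Supp \<phi>) X"
  have WW: "W1 * W2 \<le> 4 * weight (s1 + s2) (Supp \<phi>) X"
  proof (cases "Supp \<phi> = {} \<or> X = {}")
    case True then show ?thesis unfolding W1_def W2_def weight_def by auto
  next
    case False
    have pos: "setdist (Supp \<phi>) X > 0" using dp False unfolding dist_pos_def by auto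
    show ?thesis using False weight_ineq[OF pos assms(6) assms(11)]
      unfolding W1_def W2_def weight_def by auto
  qed
  have "norm (t g) \<le> C1 * weight s1 (Supp g) X * seminorm_on (K l) k g"
    using hyp1 gI dpg by auto
  also have "\<dots> \<le> C1 * W1 * (2^k * (C2 * W2 * M))"
    apply (intro mult_mono mult_left_mono)
    using dpg semg assms W1ge M0 W2ge W1g semi_ge(2)[OF semi_bdd[OF cK], of g k]
    unfolding W1_def W2_def
    by (auto simp: smooth_g[unfolded smooth_on_def])
  also have "\<dots> = (2^k * C1 * C2 * M) * (W1 * W2)" by (simp add: algebra_simps)
  also have "\<dots> \<le> (2^k * C1 * C2 * M) * (4 * weight (s1 + s2) (Supp \<phi>) X)"
    by (rule mult_left_mono[OF WW]) (use M0 assms in auto)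
  finally show "norm (t (\<lambda>x. f x * \<phi> x)) \<le> 4 * 2 ^ k * C1 * C2 * weight (s1 + s2) (Supp \<phi>) X * seminorm_on (K l) k \<phi>"
    unfolding g_def M_def by (simp add: algebra_simps)
qed

end
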